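(* Let $q>1$. For every integer $N\ge1$, $$H_{N+1}(x;q)=\frac{[N+1]_q}{N+1}\Big\{[2]_q x H_N(x;q)-2[N]_qH_{N-1}(x;q)-(q-1)[2]_q[N]_q x^2H_{N-1}(x;q)+[2]_q[N]_q!\sum_{k=0}^{N-2}\frac{(1-q^2)^{N-k}x^{N-k+1}H_k(x;q)}{[k]_q!\,[N-k+1]_q}\Big\},$$ where the sum is empty when $N=1$.
   Context: For $n\ge 0$ let $[n]_q=\frac{q^n-1}{q-1}$, $[0]_q!=1$, $[n]_q!=[1]_q\cdots[n]_q$, and $e_q(z)=\sum_{n\ge0}z^n/[n]_q!$. The $q$-Hermite polynomials $H_N(x;q)$ are defined by the identity of formal power series in $t$: $e^{-t^2}e_q([2]_q t x)=\sum_{N\ge0}H_N(x;q)\,t^N/[N]_q!$. *)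

theory Defs
  imports "HOL-Computational_Algebra.Formal_Power_Series"
begin

definition qint :: "real \<Rightarrow> nat \<Rightarrow> real" where
  "qint q n = (q ^ n - 1) / (q - 1)"

definition qfact :: "real \<Rightarrow> nat \<Rightarrow> real" where
  "qfact q n = (\<Prod>i=1..n. qint q i)"

definition qexp_fps :: "real \<Rightarrow> real fps" where
  "qexp_fps q = Abs_fps (\<lambda>n. 1 / qfact q n)"

definition qHermite_gf :: "real \<Rightarrow> real \<Rightarrow> real fps" where
  "qHermite_gf q x =
     fps_compose (fps_exp 1) (- (fps_X ^ 2)) *
     fps_compose (qexp_fps q) (fps_const (qint q 2 * x) * fps_X)"

definition qHermite :: "nat \<Rightarrow> real \<Rightarrow> real \<Rightarrow> real" where
  "qHermite N x q = qfact q N * fps_nth (qHermite_gf q x) N"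

end

theory Submission imports Defs begin
unbundle fps_syntax


lemma qint_pos: "q > 1 \<Longrightarrow> n \<ge> 1 \<Longrightarrow> qint q n > 0"
  unfolding qint_def by (simp add: one_less_power)

lemma qint_1: "q > 1 \<Longrightarrow> qint q 1 = 1"
  unfolding qint_def by simp

lemma qint_Suc0: "q > 1 \<Longrightarrow> qint q (Suc 0) = 1"
  unfolding qint_def by simp

lemma qint_2: "q > 1 \<Longrightarrow> qint q 2 = 1 + q"
  unfolding qint_def by (simp add: power2_eq_square field_simps)

lemma qfact_0[simp]: "qfact q 0 = 1" unfolding qfact_def by simp

lemma qfact_Suc: "qfact q (Suc n) = qfact q n * qint q (Suc n)"
  unfolding qfact_def by (simp add: prod.nat_ivl_Suc' mult.commute)

lemma qfact_pos: "q > 1 \<Longrightarrow> qfact q n > 0"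
  by (induction n) (auto simp: qfact_Suc qint_pos)

definition Lq :: "real \<Rightarrow> real fps" where
  "Lq q = Abs_fps (\<lambda>m. (1-q)^m / qint q (Suc m))"

lemma E_scale:
  assumes q: "q > 1"
  shows "qexp_fps q oo (fps_const q * fps_X) = (1 + fps_const (q-1) * fps_X) * qexp_fps q"
proof (rule fps_ext)
  fix n
  show "(qexp_fps q oo (fps_const q * fps_X)) $ n = ((1 + fps_const (q-1) * fps_X) * qexp_fps q) $ n"
  proof (cases n)
    case 0 then show ?thesis by (simp add: qexp_fps_def algebra_simps)
  next
    case (Suc m)
    have pm: "qint q (Suc m) > 0" using qint_pos[OF q] by simp
    have pf: "qfact q m > 0" using qfact_pos[OF q] by simp
    have "q ^ Suc m / qfact q (Suc m) = 1 / qfact q (Suc m) + (q - 1) / qfact q m"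
      using pm pf q unfolding qfact_Suc by (simp add: qint_def field_simps)
    then show ?thesis using Suc by (simp add: qexp_fps_def distrib_right mult.assoc)
  qed
qed

lemma L_scale:
  assumes q: "q > 1"
  shows "(1 + fps_const (q-1) * fps_X) * (fps_const q * (Lq q oo (fps_const q * fps_X)) - Lq q) = fps_const (q-1)"
proof (rule fps_ext)
  fix n
  have u: "q * (q^k * ((1-q)^k / qint q (Suc k))) - (1-q)^k / qint q (Suc k) = (q-1)*(1-q)^k" for k
  proof -
    have p: "qint q (Suc k) > 0" using qint_pos[OF q] by simp
    have e: "q*q^k - 1 = (q-1)*qint q (Suc k)" using q by (simp add: qint_def)
    have "q * (q^k * ((1-q)^k / qint q (Suc k))) - (1-q)^k / qint q (Suc k) = (q*q^k - 1) * ((1-q)^k / qint q (Suc k))"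
      by (simp add: algebra_simps diff_divide_distrib)
    also have "\<dots> = (q-1)*(1-q)^k" unfolding e using p by simp
    finally show ?thesis .
  qed
  have V: "fps_const q * (Lq q oo (fps_const q * fps_X)) - Lq q = Abs_fps (\<lambda>k. (q-1)*(1-q)^k)"
    by (rule fps_ext) (use u in \<open>simp add: Lq_def\<close>)
  have W: "(1 + fps_const (q-1) * fps_X) * Abs_fps (\<lambda>k. (q-1)*(1-q)^k) = fps_const (q-1)"
  proof (rule fps_ext)
    fix n show "((1 + fps_const (q-1) * fps_X) * Abs_fps (\<lambda>k. (q-1)*(1-q)^k)) $ n = fps_const (q-1) $ n"
    proof (cases n)
      case 0 then show ?thesis by simp
    next
      case (Suc m)
      have "(q-1)*(1-q)^Suc m + (q-1)*((q-1)*(1-q)^m) = 0" by (simp add: algebra_simps)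
      then show ?thesis using Suc by (simp add: distrib_right mult.assoc)
    qed
  qed
  show "((1 + fps_const (q-1) * fps_X) * (fps_const q * (Lq q oo (fps_const q * fps_X)) - Lq q)) $ n = fps_const (q-1) $ n"
    unfolding V W ..
qed

lemma E_deriv:
  assumes q: "q > 1"
  shows "fps_deriv (qexp_fps q) = qexp_fps q * Lq q"
proof -
  define E where "E = qexp_fps q"
  define L where "L = Lq q"
  define s where "s = fps_const q * (fps_X :: real fps)"
  define P where "P = 1 + fps_const (q-1) * (fps_X :: real fps)"
  define D where "D = fps_deriv E - E * L"
  have s0: "s $ 0 = 0" unfolding s_def by simp
  have ES: "E oo s = P * E" unfolding E_def s_def P_def using E_scale[OF q] .
  have LS: "P * (fps_const q * (L oo s) - L) = fps_const (q-1)" unfolding P_def L_def s_def using L_scale[OF q] .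
  have d1: "fps_deriv (E oo s) = (fps_deriv E oo s) * fps_const q"
    using fps_compose_deriv[OF s0, of E] by (simp add: s_def)
  have d2: "fps_deriv (E oo s) = fps_const (q-1) * E + P * fps_deriv E"
    unfolding ES by (simp add: P_def)
  have Ds: "D oo s = (fps_deriv E oo s) - (E oo s) * (L oo s)"
    unfolding D_def by (simp add: fps_compose_sub_distrib fps_compose_mult_distrib[OF s0])
  have key: "fps_const q * (D oo s) = P * D"
  proof -
    have "fps_const q * (D oo s) = (fps_deriv E oo s) * fps_const q - P * E * (fps_const q * (L oo s))"
      unfolding Ds ES by (simp add: algebra_simps)
    also have "(fps_deriv E oo s) * fps_const q = fps_deriv (E oo s)" by (rule d1[symmetric])
    also have "P * E * (fps_const q * (L oo s)) = E * (P * (fps_const q * (L oo s)))"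
      by (simp add: algebra_simps)
    also have "P * (fps_const q * (L oo s)) = P * L + fps_const (q-1)"
      using LS by (simp add: algebra_simps)
    finally show ?thesis unfolding d2 D_def by (simp add: algebra_simps)
  qed
  have rec: "q * q ^ Suc n * D $ Suc n = D $ Suc n + (q-1) * D $ n" for n
  proof -
    have "(fps_const q * (D oo s)) $ Suc n = (P * D) $ Suc n" using key by simp
    then show ?thesis by (simp add: s_def P_def distrib_right mult.assoc)
  qed
  have D0: "D $ 0 = 0"
    using q by (simp add: D_def E_def L_def Lq_def qexp_fps_def qfact_def qint_Suc0)
  have "D $ n = 0" for n
  proof (induction n)
    case 0 then show ?case using D0 .
  next
    case (Suc n)
    have "(q * q ^ Suc n - 1) * D $ Suc n = 0" using rec[of n] Suc by (simp add: algebra_simps)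
    moreover have "q * q ^ Suc n > 1" using one_less_power[OF q, of "Suc (Suc n)"] by simp
    ultimately show ?case by simp
  qed
  then have "D = 0" by (simp add: fps_eq_iff)
  then show ?thesis unfolding D_def E_def L_def by simp
qed

lemma gf_deriv:
  fixes q x :: real
  assumes q: "q > 1"
  defines "c \<equiv> qint q 2 * x"
  shows "fps_deriv (qHermite_gf q x) =
           qHermite_gf q x * (fps_const c * (Lq q oo (fps_const c * fps_X))) - 2 * (fps_X * qHermite_gf q x)"
proof -
  define A where "A = fps_compose (fps_exp (1::real)) (- (fps_X ^ 2))"
  define B where "B = fps_compose (qexp_fps q) (fps_const c * fps_X)"
  have G: "qHermite_gf q x = A * B" unfolding qHermite_gf_def A_def B_def c_def by simp
  have z1: "(- (fps_X ^ 2 :: real fps)) $ 0 = 0" by simp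
  have z2: "(fps_const c * fps_X :: real fps) $ 0 = 0" by simp
  have dA: "fps_deriv A = A * (- (2 * fps_X))"
    unfolding A_def fps_compose_deriv[OF z1] by (simp add: power2_eq_square algebra_simps)
  have dB: "fps_deriv B = B * (fps_const c * (Lq q oo (fps_const c * fps_X)))"
    unfolding B_def fps_compose_deriv[OF z2] E_deriv[OF q] fps_compose_mult_distrib[OF z2]
    by (simp add: algebra_simps)
  show ?thesis unfolding G by (simp add: dA dB algebra_simps)
qed

lemma coeff_rec:
  fixes q x :: real
  assumes q: "q > 1"
  defines "c \<equiv> qint q 2 * x"
  defines "h \<equiv> (\<lambda>k. qHermite_gf q x $ k)"
  defines "l \<equiv> (\<lambda>m. (1-q)^m / qint q (Suc m))"
  shows "real (Suc (Suc n)) * h (Suc (Suc n)) =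
           (\<Sum>i<n. h i * (c * (c ^ (Suc n - i) * l (Suc n - i))))
           + h n * (c * (c * l 1)) + h (Suc n) * (c * l 0) - 2 * h n"
proof -
  let ?G = "qHermite_gf q x"
  let ?M = "fps_const c * (Lq q oo (fps_const c * fps_X))"
  have Mn: "?M $ k = c * (c ^ k * l k)" for k by (simp add: Lq_def l_def)
  have "fps_deriv ?G $ Suc n = (?G * ?M) $ Suc n - (2 * (fps_X * ?G)) $ Suc n"
    using gf_deriv[OF q, of x] unfolding c_def by simp
  also have "(2 * (fps_X * ?G)) $ Suc n = 2 * h n"
    unfolding h_def by (simp add: numeral_fps_const)
  also have "(?G * ?M) $ Suc n = (\<Sum>i=0..Suc n. h i * (c * (c ^ (Suc n - i) * l (Suc n - i))))"
    by (simp only: fps_mult_nth[of ?G ?M] Mn h_def)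
  also have "\<dots> = (\<Sum>i<n. h i * (c * (c ^ (Suc n - i) * l (Suc n - i)))) + h n * (c * (c * l 1)) + h (Suc n) * (c * l 0)"
    by (simp add: atLeast0AtMost lessThan_Suc Suc_diff_le lessThan_Suc_atMost[symmetric])
  finally show ?thesis unfolding h_def by (simp add: add.commute)
qed

theorem mainTheorem4:
  fixes q x :: real and N :: nat
  assumes "q > 1" and "N \<ge> 1"
  shows "qHermite (N + 1) x q =
    qint q (N + 1) / real (N + 1) *
      ( qint q 2 * x * qHermite N x q
      - 2 * qint q N * qHermite (N - 1) x q
      - (q - 1) * qint q 2 * qint q N * x ^ 2 * qHermite (N - 1) x q
      + qint q 2 * qfact q N *
          (\<Sum>k<N - 1. (1 - q ^ 2) ^ (N - k) * x ^ (N - k + 1) * qHermite k x q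
                        / (qfact q k * qint q (N - k + 1))) )"
proof -
  note q = assms(1)
  obtain n where N: "N = Suc n" using assms(2) by (cases N) auto
  define c where "c = qint q 2 * x"
  define h where "h = (\<lambda>k. qHermite_gf q x $ k)"
  define l where "l = (\<lambda>m. (1-q)^m / qint q (Suc m))"
  have H: "qHermite k x q = qfact q k * h k" for k unfolding qHermite_def h_def ..
  have q2: "qint q 2 = 1 + q" using qint_2[OF q] .
  have q2': "qint q (Suc (Suc 0)) = 1 + q" using q2 by (simp add: numeral_2_eq_2)
  have rec: "real (Suc (Suc n)) * h (Suc (Suc n)) =
           (\<Sum>i<n. h i * (c * (c ^ (Suc n - i) * l (Suc n - i))))
           + h n * (c * (c * l 1)) + h (Suc n) * (c * l 0) - 2 * h n"
    using coeff_rec[OF q, where x=x and n=n] unfolding c_def h_def l_def .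
  have l0: "l 0 = 1" using q by (simp add: l_def qint_Suc0)
  have l1: "c * (c * l 1) = - ((q - 1) * qint q 2 * x^2)"
    using q by (simp add: l_def c_def q2 q2' power2_eq_square field_simps)
  have fpos: "qfact q k > 0" for k using qfact_pos[OF q] .
  have S: "(\<Sum>k<N - 1. (1 - q ^ 2) ^ (N - k) * x ^ (N - k + 1) * qHermite k x q
                        / (qfact q k * qint q (N - k + 1))) * qint q 2
         = (\<Sum>i<n. h i * (c * (c ^ (Suc n - i) * l (Suc n - i))))"
    unfolding N sum_distrib_right diff_Suc_1
  proof (rule sum.cong[OF refl])
    fix k assume "k \<in> {..<n}"
    define m where "m = Suc n - k"
    have "(1 - q ^ 2) ^ m = (1-q)^m * (1+q)^m"
      by (simp add: power_mult_distrib[symmetric] power2_eq_square algebra_simps)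
    moreover have "c ^ m = (1+q)^m * x^m" by (simp add: c_def q2 power_mult_distrib)
    ultimately show "(1 - q ^ 2) ^ (Suc n - k) * x ^ (Suc n - k + 1) * qHermite k x q /
         (qfact q k * qint q (Suc n - k + 1)) * qint q 2 =
         h k * (c * (c ^ (Suc n - k) * l (Suc n - k)))"
      unfolding m_def[symmetric] H l_def using fpos[of k]
      by (simp add: c_def q2 field_simps)
  qed
  have fN: "qfact q (Suc (Suc n)) = qint q (Suc (Suc n)) * qfact q (Suc n)"
    by (simp add: qfact_Suc)
  have fn: "qint q (Suc n) * qfact q n = qfact q (Suc n)" by (simp add: qfact_Suc)
  define Sg where "Sg = (\<Sum>k<N - 1. (1 - q ^ 2) ^ (N - k) * x ^ (N - k + 1) * qHermite k x q
                        / (qfact q k * qint q (N - k + 1)))"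
  define T where "T = (\<Sum>i<n. h i * (c * (c ^ (Suc n - i) * l (Suc n - i))))"
  have inner: "qint q 2 * x * qHermite N x q
      - 2 * qint q N * qHermite (N - 1) x q
      - (q - 1) * qint q 2 * qint q N * x ^ 2 * qHermite (N - 1) x q
      + qint q 2 * qfact q N * Sg = qfact q (Suc n) * (real (Suc (Suc n)) * h (Suc (Suc n)))"
  proof -
    define F where "F = qfact q (Suc n)"
    have a1: "qint q 2 * qfact q N * Sg = F * T" using S unfolding Sg_def T_def F_def N by (simp add: algebra_simps)
    have a2: "qint q N * qHermite (N - 1) x q = F * h n" unfolding N H F_def using fn by simp
    have a3: "qHermite N x q = F * h (Suc n)" unfolding N H F_def ..
    have "qint q 2 * x * qHermite N x q
      - 2 * qint q N * qHermite (N - 1) x q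
      - (q - 1) * qint q 2 * qint q N * x ^ 2 * qHermite (N - 1) x q
      + qint q 2 * qfact q N * Sg
      = c * (F * h (Suc n)) - 2 * (F * h n) - (q - 1) * qint q 2 * x^2 * (F * h n) + F * T"
      unfolding a1 a3 c_def a2[symmetric] by (simp add: algebra_simps)
    also have "\<dots> = F * (T + h n * (c * (c * l 1)) + h (Suc n) * (c * l 0) - 2 * h n)"
      unfolding l0 l1 by (simp add: algebra_simps)
    finally show ?thesis unfolding rec T_def[symmetric] F_def .
  qed
  have "qHermite (N + 1) x q = qint q (N + 1) * qfact q (Suc n) * h (Suc (Suc n))"
    by (simp add: N H fN)
  also have "\<dots> = qint q (N + 1) / real (N + 1) * (qfact q (Suc n) * (real (Suc (Suc n)) * h (Suc (Suc n))))"
    by (simp add: N)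
  finally show ?thesis unfolding inner[unfolded Sg_def, symmetric] .
qed

end
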